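(* Let $\mathbf{R}$ be an $N$-dimensional random vector with continuous marginal distributions, let $\boldsymbol{c}\in\mathbb{R}^N$ and $\mathbf{X}=\mathbf{R}-\boldsymbol{c}$. Let $F_{\mathbf{X}}(\mathbf{x})=\mathbb{P}(\mathbf{X}\le\mathbf{x})$, $\bar F_{\mathbf{X}}(\mathbf{x})=\mathbb{P}(\mathbf{X}>\mathbf{x})$ (componentwise inequalities), let $F_{X_i}$ and $\bar F_{X_i}=1-F_{X_i}$ be the marginal distribution and survival functions, let $\mathbf{U}=(F_{X_1}(X_1),\ldots,F_{X_N}(X_N))$, let $C_{\mathbf{U}}$ be the joint distribution function of $\mathbf{U}$ (the copula) and $\bar C_{\mathbf{U}}$ the joint distribution function of $\mathbf{1}_N-\mathbf{U}$ (the survival copula). Define $\Delta_{\mathbf{U}}=\tfrac12(C_{\mathbf{U}}-\bar C_{\mathbf{U}})$ and $C_{\mathbf{U}^S}=\tfrac12(C_{\mathbf{U}}+\bar C_{\mathbf{U}})$. Then for all $\mathbf{x}\in\mathbb{R}^N$, $$F_{\mathbf{X}}(\mathbf{x})-\bar F_{\mathbf{X}}(-\mathbf{x}) = \Big[C_{\mathbf{U}^S}(F_{X_1}(x_1),\ldots,F_{X_N}(x_N)) - C_{\mathbf{U}^S}(\bar F_{X_1}(-x_1),\ldots,\bar F_{X_N}(-x_N))\Big] + \Big[\Delta_{\mathbf{U}}(F_{X_1}(x_1),\ldots,F_{X_N}(x_N)) + \Delta_{\mathbf{U}}(\bar F_{X_1}(-x_1),\ldots,\bar F_{X_N}(-x_N))\Big].$$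 Moreover: (1) the first bracket is zero for all $\mathbf{x}\in\mathbb{R}^N$ if and only if marginal symmetry holds (each $X_i\overset{d}{=}-X_i$); (2) the second bracket is zero for all $\mathbf{x}\in\mathbb{R}^N$ if and only if copula central symmetry holds ($\mathbf{U}\overset{d}{=}\mathbf{1}_N-\mathbf{U}$); (3) $\mathbf{R}$ is centrally symmetric with respect to $\boldsymbol{c}$ (i.e. $\mathbf{X}\overset{d}{=}-\mathbf{X}$) if and only if it is both marginally symmetric and copula centrally symmetric.
   Context: $\mathbf{1}_N$ is the $N$-vector of ones. $C_{\mathbf{U}^S}$ is a copula (the distribution function of the mixture equal to $\mathbf{U}$ or $\mathbf{1}_N-\mathbf{U}$ with probability $1/2$ each). *)

theory Defs
  imports "HOL-Probability.Probability"
begin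

text \<open>Random vectors are maps into real^'n (N = CARD('n)); inequalities are componentwise.\<close>

definition joint_cdf :: "'a measure \<Rightarrow> ('a \<Rightarrow> real^'n) \<Rightarrow> real^'n \<Rightarrow> real" where
  "joint_cdf M X x = measure M {\<omega> \<in> space M. \<forall>i. X \<omega> $ i \<le> x $ i}"

definition joint_surv :: "'a measure \<Rightarrow> ('a \<Rightarrow> real^'n) \<Rightarrow> real^'n \<Rightarrow> real" where
  "joint_surv M X x = measure M {\<omega> \<in> space M. \<forall>i. X \<omega> $ i > x $ i}"

definition marg_cdf :: "'a measure \<Rightarrow> ('a \<Rightarrow> real^'n) \<Rightarrow> 'n \<Rightarrow> real \<Rightarrow> real" where
  "marg_cdf M X i t = measure M {\<omega> \<in> space M. X \<omega> $ i \<le> t}"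

definition marg_surv :: "'a measure \<Rightarrow> ('a \<Rightarrow> real^'n) \<Rightarrow> 'n \<Rightarrow> real \<Rightarrow> real" where
  "marg_surv M X i t = 1 - marg_cdf M X i t"

definition copula_vec :: "'a measure \<Rightarrow> ('a \<Rightarrow> real^'n) \<Rightarrow> 'a \<Rightarrow> real^'n" where
  "copula_vec M X \<omega> = (\<chi> i. marg_cdf M X i (X \<omega> $ i))"

definition copula :: "'a measure \<Rightarrow> ('a \<Rightarrow> real^'n) \<Rightarrow> real^'n \<Rightarrow> real" where
  "copula M X u = joint_cdf M (copula_vec M X) u"

definition surv_copula :: "'a measure \<Rightarrow> ('a \<Rightarrow> real^'n) \<Rightarrow> real^'n \<Rightarrow> real" where
  "surv_copula M X u = joint_cdf M (\<lambda>\<omega>. (\<chi> i. 1) - copula_vec M X \<omega>) u"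

definition copula_delta :: "'a measure \<Rightarrow> ('a \<Rightarrow> real^'n) \<Rightarrow> real^'n \<Rightarrow> real" where
  "copula_delta M X u = (copula M X u - surv_copula M X u) / 2"

definition copula_sym :: "'a measure \<Rightarrow> ('a \<Rightarrow> real^'n) \<Rightarrow> real^'n \<Rightarrow> real" where
  "copula_sym M X u = (copula M X u + surv_copula M X u) / 2"

end

theory Submission
  imports Defs
begin



lemma jc_sets[measurable]: "(V::'a \<Rightarrow> real^'n) \<in> borel_measurable M \<Longrightarrow> {\<omega>\<in>space M. \<forall>i. V \<omega> $ i \<le> a $ i} \<in> sets M"
proof -
  assume [measurable]: "V \<in> borel_measurable M"
  have "{\<omega>\<in>space M. \<forall>i. V \<omega> $ i \<le> a $ i} = V -` {..a} \<inter> space M"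
    by (auto simp: less_eq_vec_def)
  then show ?thesis by simp
qed

lemma jc_distr: "(V::'a \<Rightarrow> real^'n) \<in> borel_measurable M \<Longrightarrow> joint_cdf M V a = measure (distr M borel V) {..a}"
  unfolding joint_cdf_def
  by (subst measure_distr) (auto simp: less_eq_vec_def vimage_def Int_def conj_commute)

lemma mv_unique:
  fixes V W :: "'a \<Rightarrow> real^'n"
  assumes "prob_space M" "V \<in> borel_measurable M" "W \<in> borel_measurable M"
    and eq: "\<And>a. joint_cdf M V a = joint_cdf M W a"
  shows "distr M borel V = distr M borel W"
proof (rule measure_eqI_generator_eq[where \<Omega>=UNIV and E="range (\<lambda>a. {..a})" and A="\<lambda>n. {..(\<chi> i. real n)}"])
  interpret P1: prob_space "distr M borel V" by (intro prob_space.prob_space_distr assms)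
  interpret P2: prob_space "distr M borel W" by (intro prob_space.prob_space_distr assms)
  show "Int_stable (range (\<lambda>a. {..a::real^'n}))"
  proof (auto simp: Int_stable_def)
    fix a b :: "real^'n"
    have "{..a} \<inter> {..b} = {..inf a b}" by auto
    then show "{..a} \<inter> {..b} \<in> range atMost" by blast
  qed
  show "emeasure (distr M borel V) X = emeasure (distr M borel W) X" if "X \<in> range (\<lambda>a. {..a})" for X
    using that eq[unfolded jc_distr[OF assms(2)] jc_distr[OF assms(3)]]
    by (auto simp: P1.emeasure_eq_measure P2.emeasure_eq_measure)
  show "sets (distr M borel V) = sigma_sets UNIV (range (\<lambda>a. {..a::real^'n}))"
    by (simp add: borel_eq_atMost)
  show "sets (distr M borel W) = sigma_sets UNIV (range (\<lambda>a. {..a::real^'n}))"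
    by (simp add: borel_eq_atMost)
  show "(\<Union>n. {..(\<chi> i. real n)}) = (UNIV :: (real^'n) set)"
  proof -
    have "x \<in> (\<Union>n. {..(\<chi> i. real n)})" for x :: "real^'n"
    proof -
      obtain n :: nat where "Max (range (\<lambda>i. x $ i)) \<le> real n" using real_arch_simple by blast
      then have "x \<le> (\<chi> i. real n)"
        by (auto simp: less_eq_vec_def intro: order_trans[OF Max_ge])
      then show ?thesis by auto
    qed
    then show ?thesis by auto
  qed
  show "emeasure (distr M borel V) {..(\<chi> i. real n)} \<noteq> \<infinity>" for n
    by (simp add: P1.emeasure_eq_measure)
qed auto



lemma (in prob_space) jc_lip_half:
  fixes V :: "'a \<Rightarrow> real^'n"
  assumes [measurable]: "V \<in> borel_measurable M"
   and inc: "\<And>i s t. s \<le> t \<Longrightarrow> measure M {\<omega>\<in>space M. V \<omega> $ i \<le> t} - measure M {\<omega>\<in>space M. V \<omega> $ i \<le> s} \<le> t - s"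
  shows "joint_cdf M V a \<le> joint_cdf M V b + (\<Sum>i\<in>UNIV. \<bar>a$i - b$i\<bar>)"
proof -
  have Vi[measurable]: "(\<lambda>\<omega>. V \<omega> $ i) \<in> borel_measurable M" for i
    by (intro borel_measurable_continuous_on[where f="\<lambda>v. v $ i"]) (auto intro: continuous_intros)
  define D where "D i = {\<omega>\<in>space M. b$i < V \<omega> $ i \<and> V \<omega> $ i \<le> a$i}" for i
  have Dm[measurable]: "D i \<in> sets M" for i unfolding D_def by measurable
  have sub: "{\<omega>\<in>space M. \<forall>i. V \<omega> $ i \<le> a $ i} \<subseteq> {\<omega>\<in>space M. \<forall>i. V \<omega> $ i \<le> b $ i} \<union> (\<Union>i\<in>UNIV. D i)"
    by (auto simp: D_def not_le)
  have mD: "measure M (D i) \<le> \<bar>a$i - b$i\<bar>" for i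
  proof (cases "a$i \<le> b$i")
    case True
    then have "D i = {}" by (auto simp: D_def)
    then show ?thesis by simp
  next
    case False
    then have "D i = {\<omega>\<in>space M. V \<omega> $ i \<le> a$i} - {\<omega>\<in>space M. V \<omega> $ i \<le> b$i}"
      by (auto simp: D_def)
    moreover have "measure M ({\<omega>\<in>space M. V \<omega> $ i \<le> a$i} - {\<omega>\<in>space M. V \<omega> $ i \<le> b$i})
        = measure M {\<omega>\<in>space M. V \<omega> $ i \<le> a$i} - measure M {\<omega>\<in>space M. V \<omega> $ i \<le> b$i}"
      using False by (intro finite_measure_Diff) auto
    ultimately show ?thesis using inc[of "b$i" "a$i" i] False by simp
  qed
  have "joint_cdf M V a \<le> measure M ({\<omega>\<in>space M. \<forall>i. V \<omega> $ i \<le> b $ i} \<union> (\<Union>i\<in>UNIV. D i))"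
    unfolding joint_cdf_def using sub by (intro finite_measure_mono) auto
  also have "\<dots> \<le> joint_cdf M V b + measure M (\<Union>i\<in>UNIV. D i)"
    unfolding joint_cdf_def by (intro measure_Un_le) auto
  also have "measure M (\<Union>i\<in>UNIV. D i) \<le> (\<Sum>i\<in>UNIV. measure M (D i))"
    by (intro finite_measure_subadditive_finite) auto
  also have "\<dots> \<le> (\<Sum>i\<in>UNIV. \<bar>a$i - b$i\<bar>)"
    by (intro sum_mono mD)
  finally show ?thesis by simp
qed

lemma (in prob_space) jc_lip:
  fixes V :: "'a \<Rightarrow> real^'n"
  assumes "V \<in> borel_measurable M"
   and "\<And>i s t. s \<le> t \<Longrightarrow> measure M {\<omega>\<in>space M. V \<omega> $ i \<le> t} - measure M {\<omega>\<in>space M. V \<omega> $ i \<le> s} \<le> t - s"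
  shows "\<bar>joint_cdf M V a - joint_cdf M V b\<bar> \<le> (\<Sum>i\<in>UNIV. \<bar>a$i - b$i\<bar>)"
  using jc_lip_half[OF assms, of a b] jc_lip_half[OF assms, of b a]
  by (simp add: abs_minus_commute)

lemma (in prob_space) jc_ones:
  fixes V :: "'a \<Rightarrow> real^'n"
  assumes "\<And>\<omega> j. \<omega> \<in> space M \<Longrightarrow> V \<omega> $ j \<le> 1"
  shows "joint_cdf M V (\<chi> j. if j = i then t else 1) = measure M {\<omega>\<in>space M. V \<omega> $ i \<le> t}"
proof -
  have "{\<omega>\<in>space M. \<forall>j. V \<omega> $ j \<le> (\<chi> j. if j = i then t else 1) $ j} = {\<omega>\<in>space M. V \<omega> $ i \<le> t}"
    using assms by auto
  then show ?thesis by (simp add: joint_cdf_def)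
qed

lemma (in prob_space) jc_clamp:
  fixes V :: "'a \<Rightarrow> real^'n"
  assumes [measurable]: "V \<in> borel_measurable M"
   and rng: "\<And>\<omega> j. \<omega> \<in> space M \<Longrightarrow> 0 \<le> V \<omega> $ j \<and> V \<omega> $ j \<le> 1"
   and z: "\<And>j. measure M {\<omega>\<in>space M. V \<omega> $ j = 0} = 0"
  shows "joint_cdf M V a = joint_cdf M V (\<chi> j. max 0 (min 1 (a$j)))"
proof -
  have Vi[measurable]: "(\<lambda>\<omega>. V \<omega> $ i) \<in> borel_measurable M" for i
    by (intro borel_measurable_continuous_on[where f="\<lambda>v. v $ i"]) (auto intro: continuous_intros)
  have "AE \<omega> in M. V \<omega> $ j \<noteq> 0" for j
    using z[of j] by (subst AE_iff_measurable[OF _ refl]) (auto simp: emeasure_eq_measure)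
  then have ae: "AE \<omega> in M. \<forall>j. V \<omega> $ j \<noteq> 0"
    by (subst AE_all_countable) auto
  show ?thesis unfolding joint_cdf_def
  proof (rule finite_measure_eq_AE)
    show "AE \<omega> in M. (\<omega> \<in> {\<omega>\<in>space M. \<forall>j. V \<omega> $ j \<le> a $ j}) =
        (\<omega> \<in> {\<omega>\<in>space M. \<forall>j. V \<omega> $ j \<le> (\<chi> j. max 0 (min 1 (a$j))) $ j})"
      using ae
    proof eventually_elim
      case (elim \<omega>)
      show ?case
      proof (cases "\<omega> \<in> space M")
        case True
        have "V \<omega> $ j \<le> a $ j \<longleftrightarrow> V \<omega> $ j \<le> max 0 (min 1 (a$j))" for j
          using rng[OF True, of j] elim[rule_format, of j] by auto
        then show ?thesis using True by simp
      qed simp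
    qed
  qed measurable
qed



lemma step1:
  fixes g h :: "real \<Rightarrow> real"
  assumes gm: "\<And>s t. s \<le> t \<Longrightarrow> g s \<le> g t"
    and gb: "\<And>t. 0 \<le> g t \<and> g t \<le> 1" and hb: "\<And>t. 0 \<le> h t \<and> h t \<le> 1"
    and surj: "\<And>v. 0 < v \<Longrightarrow> v < 1 \<Longrightarrow> \<exists>t. g t = v"
    and d: "0 < \<delta>"
  shows "\<exists>t'. \<bar>g t' - h t\<bar> \<le> \<delta> \<and> (g t \<le> h t \<longrightarrow> t \<le> t' \<and> g t' \<le> h t) \<and> (h t \<le> g t \<longrightarrow> t' \<le> t \<and> h t \<le> g t')"
proof (cases "g t \<le> h t")
  case True
  show ?thesis
  proof (cases "h t - \<delta> \<le> g t")
    case True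
    then show ?thesis using \<open>g t \<le> h t\<close> by (intro exI[of _ t]) auto
  next
    case False
    obtain t' where t': "g t' = h t - \<delta>/2" using surj[of "h t - \<delta>/2"] False gb[of t] hb[of t] d by auto
    have "t \<le> t'"
    proof (rule ccontr)
      assume "\<not> t \<le> t'" then have "g t' \<le> g t" using gm[of t' t] by auto
      then show False using t' False d by auto
    qed
    then show ?thesis using t' False d by (intro exI[of _ t']) auto
  qed
next
  case False
  show ?thesis
  proof (cases "g t \<le> h t + \<delta>")
    case True
    then show ?thesis using False by (intro exI[of _ t]) auto
  next
    case False2: False
    obtain t' where t': "g t' = h t + \<delta>/2" using surj[of "h t + \<delta>/2"] False2 gb[of t] hb[of t] d by auto
    have "t' \<le> t"
    proof (rule ccontr)
      assume "\<not> t' \<le> t" then have "g t \<le> g t'" using gm[of t t'] by auto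
      then show False using t' False2 d by auto
    qed
    then show ?thesis using t' False False2 d by (intro exI[of _ t']) auto
  qed
qed

lemma iter_zero:
  fixes D :: "real^'n \<Rightarrow> real" and G H :: "'n \<Rightarrow> real \<Rightarrow> real"
  assumes lip: "\<And>a b. \<bar>D a - D b\<bar> \<le> (\<Sum>i\<in>UNIV. \<bar>a$i - b$i\<bar>)"
   and Gm: "\<And>i s t. s \<le> t \<Longrightarrow> G i s \<le> G i t"
   and Hm: "\<And>i s t. s \<le> t \<Longrightarrow> H i s \<le> H i t"
   and Gb: "\<And>i t. 0 \<le> G i t \<and> G i t \<le> 1"
   and Hb: "\<And>i t. 0 \<le> H i t \<and> H i t \<le> 1"
   and surj: "\<And>i v. 0 < v \<Longrightarrow> v < 1 \<Longrightarrow> \<exists>t. G i t = v"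
   and rel: "\<And>x. D (\<chi> i. G i (x$i)) + D (\<chi> i. H i (x$i)) = 0"
  shows "D (\<chi> i. G i (x0$i)) = 0"
proof -
  define N where "N = real CARD('n)"
  have N0: "0 \<le> N" by (simp add: N_def)
  define c where "c = D (\<chi> i. G i (x0$i))"
  define P where "P = (\<lambda>\<delta> i t t'. \<bar>G i t' - H i t\<bar> \<le> \<delta> \<and> (G i t \<le> H i t \<longrightarrow> t \<le> t' \<and> G i t' \<le> H i t) \<and> (H i t \<le> G i t \<longrightarrow> t' \<le> t \<and> H i t \<le> G i t'))"
  have vstep: "\<exists>x'. \<forall>i. P \<delta> i (x$i) (x'$i)" if "0 < \<delta>" for \<delta> x
  proof -
    have "\<forall>i. \<exists>t'. P \<delta> i (x$i) t'"
    proof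
      fix i show "\<exists>t'. P \<delta> i (x$i) t'"
        unfolding P_def by (rule step1[of "G i" "H i"]) (use Gm Gb Hb surj that in auto)
    qed
    then obtain f where "\<forall>i. P \<delta> i (x$i) (f i)" by metis
    then show ?thesis by (intro exI[of _ "\<chi> i. f i"]) simp
  qed
  have bound: "\<bar>c\<bar> \<le> (N + 1) * \<epsilon>" if eps: "0 < \<epsilon>" for \<epsilon>
  proof -
    define \<delta> where "\<delta> n = \<epsilon> * (1/2)^(Suc n)" for n :: nat
    have \<delta>pos: "0 < \<delta> n" for n using eps by (simp add: \<delta>_def)
    have "\<forall>n. \<forall>x. \<exists>x'. \<forall>i. P (\<delta> n) i (x$i) (x'$i)" using vstep \<delta>pos by blast
    then obtain S where S: "\<And>n x i. P (\<delta> n) i (x$i) (S n x $ i)" by metis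
    define xs where "xs = rec_nat x0 (\<lambda>n y. S n y)"
    have xs0: "xs 0 = x0" and xsS: "xs (Suc n) = S n (xs n)" for n by (simp_all add: xs_def)
    define A where "A n = (\<chi> i. G i (xs n $ i))" for n
    define Hv where "Hv n = (\<chi> i. H i (xs n $ i))" for n
    have Pn: "P (\<delta> n) i (xs n $ i) (xs (Suc n) $ i)" for n i using S[where n=n and x="xs n" and i=i] by (simp add: xsS)
    have conv: "convergent (\<lambda>n. G i (xs n $ i))" for i
    proof (cases "G i (x0$i) \<le> H i (x0$i)")
      case True
      have inv: "G i (xs n $ i) \<le> H i (xs n $ i)" for n
      proof (induction n)
        case 0 then show ?case using True by (simp add: xs0)
      next
        case (Suc n)
        then have "xs n $ i \<le> xs (Suc n) $ i" "G i (xs (Suc n) $ i) \<le> H i (xs n $ i)"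
          using Pn[of n i] by (auto simp: P_def)
        then show ?case using Hm[of "xs n $ i" "xs (Suc n) $ i" i] by linarith
      qed
      have "incseq (\<lambda>n. G i (xs n $ i))"
      proof (rule incseq_SucI)
        fix n show "G i (xs n $ i) \<le> G i (xs (Suc n) $ i)"
          using Pn[of n i] inv[of n] Gm by (auto simp: P_def)
      qed
      then have "monoseq (\<lambda>n. G i (xs n $ i))" by (simp add: monoseq_iff)
      moreover have "Bseq (\<lambda>n. G i (xs n $ i))" using Gb by (intro BseqI'[of _ 1]) auto
      ultimately show ?thesis using Bseq_monoseq_convergent by blast
    next
      case False
      have inv: "H i (xs n $ i) \<le> G i (xs n $ i)" for n
      proof (induction n)
        case 0 then show ?case using False by (simp add: xs0)
      next
        case (Suc n)
        then have "xs (Suc n) $ i \<le> xs n $ i" "H i (xs n $ i) \<le> G i (xs (Suc n) $ i)"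
          using Pn[of n i] by (auto simp: P_def)
        then show ?case using Hm[of "xs (Suc n) $ i" "xs n $ i" i] by linarith
      qed
      have "decseq (\<lambda>n. G i (xs n $ i))"
      proof (rule decseq_SucI)
        fix n show "G i (xs (Suc n) $ i) \<le> G i (xs n $ i)"
          using Pn[of n i] inv[of n] Gm by (auto simp: P_def)
      qed
      then have "monoseq (\<lambda>n. G i (xs n $ i))" by (simp add: monoseq_iff)
      moreover have "Bseq (\<lambda>n. G i (xs n $ i))" using Gb by (intro BseqI'[of _ 1]) auto
      ultimately show ?thesis using Bseq_monoseq_convergent by blast
    qed
    have err: "\<bar>(-1)^n * D (A n) - c\<bar> \<le> N * \<epsilon> * (1 - (1/2)^n)" for n
    proof (induction n)
      case 0 then show ?case by (simp add: A_def c_def xs0)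
    next
      case (Suc n)
      have r: "D (A n) + D (Hv n) = 0" using rel[of "xs n"] by (simp add: A_def Hv_def)
      have "\<bar>D (A (Suc n)) - D (Hv n)\<bar> \<le> (\<Sum>i\<in>UNIV. \<bar>A (Suc n) $ i - Hv n $ i\<bar>)" by (rule lip)
      also have "\<dots> \<le> (\<Sum>i\<in>(UNIV::'n set). \<delta> n)"
        using Pn[of n] by (intro sum_mono) (auto simp: A_def Hv_def P_def)
      also have "\<dots> = N * \<delta> n" by (simp add: N_def)
      finally have e1: "\<bar>D (A (Suc n)) - D (Hv n)\<bar> \<le> N * \<delta> n" .
      have eq: "(-1)^(Suc n) * D (A (Suc n)) - c = ((-1)^n * D (A n) - c) - (-1)^n * (D (A (Suc n)) - D (Hv n))"
      proof -
        have "D (Hv n) = - D (A n)" using r by linarith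
        then show ?thesis by (simp add: algebra_simps)
      qed
      have "\<bar>(-1)^n * (D (A (Suc n)) - D (Hv n))\<bar> = \<bar>D (A (Suc n)) - D (Hv n)\<bar>"
        by (simp add: abs_mult)
      then have "\<bar>(-1)^(Suc n) * D (A (Suc n)) - c\<bar> \<le> N * \<epsilon> * (1 - (1/2)^n) + N * \<delta> n"
        using Suc e1 unfolding eq by linarith
      also have "\<dots> = N * \<epsilon> * (1 - (1/2)^(Suc n))"
        by (simp add: \<delta>_def algebra_simps)
      finally show ?case .
    qed
    have errb: "\<bar>(-1)^n * D (A n) - c\<bar> \<le> N * \<epsilon>" for n
    proof -
      have "N * \<epsilon> * (1 - (1/2)^n) \<le> N * \<epsilon>"
        using N0 eps by (simp add: mult_left_le)
      then show ?thesis using err[of n] by linarith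
    qed
    have "(\<lambda>n. \<Sum>i\<in>UNIV. \<bar>G i (xs (Suc n) $ i) - G i (xs n $ i)\<bar>) \<longlonglongrightarrow> (\<Sum>i\<in>(UNIV::'n set). \<bar>0\<bar>)"
    proof (intro tendsto_sum tendsto_rabs)
      fix i
      obtain L where L: "(\<lambda>n. G i (xs n $ i)) \<longlonglongrightarrow> L" using conv[of i] by (auto simp: convergent_def)
      show "(\<lambda>n. G i (xs (Suc n) $ i) - G i (xs n $ i)) \<longlonglongrightarrow> 0"
        using tendsto_diff[OF LIMSEQ_Suc[OF L] L] by simp
    qed
    then have "(\<lambda>n. \<Sum>i\<in>UNIV. \<bar>G i (xs (Suc n) $ i) - G i (xs n $ i)\<bar>) \<longlonglongrightarrow> 0" by simp
    from order_tendstoD(2)[OF this eps] obtain n where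
      small: "(\<Sum>i\<in>UNIV. \<bar>G i (xs (Suc n) $ i) - G i (xs n $ i)\<bar>) < \<epsilon>"
      by (auto simp: eventually_sequentially)
    have dd: "\<bar>D (A (Suc n)) - D (A n)\<bar> < \<epsilon>"
      using lip[of "A (Suc n)" "A n"] small by (simp add: A_def)
    have eq2: "-2 * c = ((-1)^n * D (A n) - c) + ((-1)^(Suc n) * D (A (Suc n)) - c) + (-1)^n * (D (A (Suc n)) - D (A n))"
      by (simp add: algebra_simps)
    have "\<bar>(-1)^n * (D (A (Suc n)) - D (A n))\<bar> = \<bar>D (A (Suc n)) - D (A n)\<bar>"
      by (simp add: abs_mult)
    then have "\<bar>-2 * c\<bar> \<le> N * \<epsilon> + N * \<epsilon> + \<epsilon>"
      using errb[of n] errb[of "Suc n"] dd unfolding eq2 by linarith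
    then show ?thesis using eps N0 by (simp add: algebra_simps abs_mult)
  qed
  show ?thesis
  proof (rule ccontr)
    assume "D (\<chi> i. G i (x0$i)) \<noteq> 0"
    then have cpos: "0 < \<bar>c\<bar>" by (simp add: c_def)
    have "\<bar>c\<bar> \<le> (N + 1) * (\<bar>c\<bar> / (2 * (N + 1)))"
      using bound[of "\<bar>c\<bar> / (2 * (N + 1))"] cpos N0 by simp
    also have "\<dots> = \<bar>c\<bar> / 2" using N0 by (simp add: field_simps)
    finally show False using cpos by simp
  qed
qed



lemma vec_meas: "(\<And>i. (\<lambda>x. f x $ i) \<in> borel_measurable M) \<Longrightarrow> (f::'a \<Rightarrow> real^'n) \<in> borel_measurable M"
  by (subst borel_measurable_euclidean_space) (auto simp: Basis_vec_def inner_axis)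

lemma vec_nth_meas[measurable]: "(f::'a \<Rightarrow> real^'n) \<in> borel_measurable M \<Longrightarrow> (\<lambda>x. f x $ i) \<in> borel_measurable M"
  by (intro borel_measurable_continuous_on[where f="\<lambda>v. v $ i"]) (auto intro: continuous_intros)

locale cm = prob_space M for M :: "'a measure" +
  fixes X :: "'a \<Rightarrow> real^'n"
  assumes Xm[measurable]: "X \<in> borel_measurable M"
  and cont: "\<And>i t. measure M {\<omega> \<in> space M. X \<omega> $ i = t} = 0"
begin

abbreviation "F \<equiv> marg_cdf M X"

lemma F_cdf: "F i = cdf (distr M borel (\<lambda>\<omega>. X \<omega> $ i))"
  by (rule ext) (simp add: marg_cdf_def cdf_def measure_distr vimage_def Int_def conj_commute)

lemma rd: "real_distribution (distr M borel (\<lambda>\<omega>. X \<omega> $ i))"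
  by (intro real_distribution_distr) simp

lemma fbm: "finite_borel_measure (distr M borel (\<lambda>\<omega>. X \<omega> $ i))"
  using real_distribution.finite_borel_measure_M[OF rd] .

lemma F_mono: "s \<le> t \<Longrightarrow> F i s \<le> F i t"
  unfolding F_cdf using finite_borel_measure.cdf_nondecreasing[OF fbm] by blast

lemma F_mono': "mono (F i)"
  using F_mono by (auto intro: monoI)

lemma F_nonneg: "0 \<le> F i t"
  by (simp add: marg_cdf_def)

lemma F_le1: "F i t \<le> 1"
  by (simp add: marg_cdf_def)

lemma F_cont: "isCont (F i) t"
proof -
  have "measure (distr M borel (\<lambda>\<omega>. X \<omega> $ i)) {t} = measure M {\<omega> \<in> space M. X \<omega> $ i = t}"
    by (simp add: measure_distr vimage_def Int_def conj_commute)
  then show ?thesis unfolding F_cdf using finite_borel_measure.isCont_cdf[OF fbm] cont by simp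
qed

lemma F_top: "(F i \<longlongrightarrow> 1) at_top"
  unfolding F_cdf using real_distribution.cdf_lim_at_top_prob[OF rd] .

lemma F_bot: "(F i \<longlongrightarrow> 0) at_bot"
  unfolding F_cdf using finite_borel_measure.cdf_lim_at_bot[OF real_distribution.finite_borel_measure_M[OF rd]] .

lemma F_surj:
  assumes "0 < v" "v < 1" shows "\<exists>t. F i t = v"
proof -
  have "eventually (\<lambda>t. F i t < v) at_bot"
    using order_tendstoD(2)[OF F_bot assms(1)] .
  then obtain a where a: "\<And>t. t \<le> a \<Longrightarrow> F i t < v" by (auto simp: eventually_at_bot_linorder)
  have "eventually (\<lambda>t. F i t > v) at_top"
    using order_tendstoD(1)[OF F_top assms(2)] .
  then obtain b where b: "\<And>t. t \<ge> b \<Longrightarrow> F i t > v" by (auto simp: eventually_at_top_linorder)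
  have "\<exists>x\<ge>a. x \<le> max a b \<and> F i x = v"
    by (rule IVT) (use a[of a] b[of "max a b"] F_cont in auto)
  then show ?thesis by blast
qed

lemma U_meas[measurable]: "(\<lambda>\<omega>. F i (X \<omega> $ i)) \<in> borel_measurable M"
  using measurable_compose[OF vec_nth_meas[OF Xm] borel_measurable_mono[OF F_mono']] by simp

lemma U_le: assumes "0 \<le> v" "v < 1" shows "measure M {\<omega>\<in>space M. F i (X \<omega> $ i) \<le> v} \<le> v"
proof (rule dense_ge_bounded[OF assms(2)])
  fix w assume w: "v < w" "w < 1"
  obtain s where s: "F i s = w" using F_surj[of w i] w assms by auto
  have "X \<omega> $ i \<le> s" if "F i (X \<omega> $ i) \<le> v" for \<omega>
    by (cases "X \<omega> $ i \<le> s") (use F_mono[of s "X \<omega> $ i" i] that s w in auto)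
  then have "{\<omega>\<in>space M. F i (X \<omega> $ i) \<le> v} \<subseteq> {\<omega>\<in>space M. X \<omega> $ i \<le> s}"
    by auto
  then have "measure M {\<omega>\<in>space M. F i (X \<omega> $ i) \<le> v} \<le> F i s"
    unfolding marg_cdf_def by (intro finite_measure_mono) auto
  then show "measure M {\<omega>\<in>space M. F i (X \<omega> $ i) \<le> v} \<le> w" using s by simp
qed

lemma U_less: assumes "0 < v" "v \<le> 1" shows "v \<le> measure M {\<omega>\<in>space M. F i (X \<omega> $ i) < v}"
proof (rule dense_le_bounded[OF assms(1)])
  fix w assume w: "0 < w" "w < v"
  obtain s where s: "F i s = w" using F_surj[of w i] w assms by auto
  have "{\<omega>\<in>space M. X \<omega> $ i \<le> s} \<subseteq> {\<omega>\<in>space M. F i (X \<omega> $ i) < v}"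
    using s w F_mono[of _ s i] by force
  then have "F i s \<le> measure M {\<omega>\<in>space M. F i (X \<omega> $ i) < v}"
    unfolding marg_cdf_def by (intro finite_measure_mono) auto
  then show "w \<le> measure M {\<omega>\<in>space M. F i (X \<omega> $ i) < v}" using s by simp
qed



end


context cm begin

lemma cv_nth[simp]: "copula_vec M X \<omega> $ i = F i (X \<omega> $ i)"
  by (simp add: copula_vec_def)

lemma U_vec_meas[measurable]: "copula_vec M X \<in> borel_measurable M"
  by (rule vec_meas) simp

lemma W_vec_meas[measurable]: "(\<lambda>\<omega>. (\<chi> i. 1) - copula_vec M X \<omega>) \<in> borel_measurable M"
  by (rule vec_meas) simp

lemma U_le_eq: "measure M {\<omega>\<in>space M. F i (X \<omega> $ i) \<le> t} = max 0 (min 1 t)"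
proof -
  consider "t < 0" | "1 < t" | "0 \<le> t" "t \<le> 1" by linarith
  then show ?thesis
  proof cases
    case 1
    have "\<not> F i s \<le> t" for s using F_nonneg[of i s] 1 by linarith
    then have eq: "{\<omega>\<in>space M. F i (X \<omega> $ i) \<le> t} = {}" by auto
    show ?thesis using 1 by (simp add: eq)
  next
    case 2
    have "F i s \<le> t" for s using F_le1[of i s] 2 by linarith
    then have "{\<omega>\<in>space M. F i (X \<omega> $ i) \<le> t} = space M" by auto
    then show ?thesis using 2 by (simp add: prob_space)
  next
    case 3
    have le: "measure M {\<omega>\<in>space M. F i (X \<omega> $ i) \<le> t} \<le> t"
    proof (cases "t < 1")
      case True then show ?thesis using U_le 3 by blast
    next
      case False then show ?thesis using 3 by simp
    qed
    have ge: "t \<le> measure M {\<omega>\<in>space M. F i (X \<omega> $ i) \<le> t}"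
    proof (cases "0 < t")
      case True
      have "measure M {\<omega>\<in>space M. F i (X \<omega> $ i) < t} \<le> measure M {\<omega>\<in>space M. F i (X \<omega> $ i) \<le> t}"
        by (intro finite_measure_mono) auto
      then show ?thesis using U_less[of t i] True 3 by linarith
    next
      case False then show ?thesis using 3 by simp
    qed
    show ?thesis using le ge 3 by simp
  qed
qed

lemma U_less_eq: "measure M {\<omega>\<in>space M. F i (X \<omega> $ i) < t} = max 0 (min 1 t)"
proof -
  consider "t \<le> 0" | "1 < t" | "0 < t" "t \<le> 1" by linarith
  then show ?thesis
  proof cases
    case 1
    have "\<not> F i s < t" for s using F_nonneg[of i s] 1 by linarith
    then have eq: "{\<omega>\<in>space M. F i (X \<omega> $ i) < t} = {}" by auto
    show ?thesis using 1 by (simp add: eq)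
  next
    case 2
    have "F i s < t" for s using F_le1[of i s] 2 by linarith
    then have "{\<omega>\<in>space M. F i (X \<omega> $ i) < t} = space M" by auto
    then show ?thesis using 2 by (simp add: prob_space)
  next
    case 3
    have "measure M {\<omega>\<in>space M. F i (X \<omega> $ i) < t} \<le> measure M {\<omega>\<in>space M. F i (X \<omega> $ i) \<le> t}"
      by (intro finite_measure_mono) auto
    then show ?thesis using U_less[of t i] U_le_eq[of i t] 3 by simp
  qed
qed

lemma U_eq0: "measure M {\<omega>\<in>space M. F i (X \<omega> $ i) = t} = 0"
proof -
  have "{\<omega>\<in>space M. F i (X \<omega> $ i) = t} = {\<omega>\<in>space M. F i (X \<omega> $ i) \<le> t} - {\<omega>\<in>space M. F i (X \<omega> $ i) < t}"
    by auto
  moreover have "measure M ({\<omega>\<in>space M. F i (X \<omega> $ i) \<le> t} - {\<omega>\<in>space M. F i (X \<omega> $ i) < t})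
     = measure M {\<omega>\<in>space M. F i (X \<omega> $ i) \<le> t} - measure M {\<omega>\<in>space M. F i (X \<omega> $ i) < t}"
    by (intro finite_measure_Diff) auto
  ultimately show ?thesis using U_le_eq U_less_eq by simp
qed

lemma AE_U_neq: "AE \<omega> in M. \<forall>i. F i (X \<omega> $ i) \<noteq> v i"
proof -
  have "AE \<omega> in M. F i (X \<omega> $ i) \<noteq> v i" for i
    using U_eq0[of i "v i"] by (subst AE_iff_measurable[OF _ refl]) (auto simp: emeasure_eq_measure)
  then show ?thesis by (subst AE_all_countable) auto
qed

lemma W_le_eq: "measure M {\<omega>\<in>space M. 1 - F i (X \<omega> $ i) \<le> t} = max 0 (min 1 t)"
proof -
  have "{\<omega>\<in>space M. 1 - F i (X \<omega> $ i) \<le> t} = space M - {\<omega>\<in>space M. F i (X \<omega> $ i) < 1 - t}"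
    by auto
  moreover have "measure M (space M - {\<omega>\<in>space M. F i (X \<omega> $ i) < 1 - t}) = 1 - measure M {\<omega>\<in>space M. F i (X \<omega> $ i) < 1 - t}"
    by (intro prob_compl) auto
  ultimately show ?thesis using U_less_eq[of i "1 - t"] by simp
qed

lemma absh: "\<bar>x1 - y1\<bar> \<le> s \<Longrightarrow> \<bar>x2 - y2\<bar> \<le> s \<Longrightarrow> \<bar>(x1 - x2)/2 - (y1 - y2)/2\<bar> \<le> (s::real)"
  by (auto simp: abs_le_iff field_simps)

lemma absh2: "\<bar>x1 - y1\<bar> \<le> s \<Longrightarrow> \<bar>x2 - y2\<bar> \<le> s \<Longrightarrow> \<bar>(x1 + x2)/2 - (y1 + y2)/2\<bar> \<le> (s::real)"
  by (auto simp: abs_le_iff field_simps)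

lemma clamp_inc: "s \<le> t \<Longrightarrow> max 0 (min 1 t) - max 0 (min 1 s) \<le> t - (s::real)"
  by linarith

lemma C_lip: "\<bar>copula M X a - copula M X b\<bar> \<le> (\<Sum>i\<in>UNIV. \<bar>a$i - b$i\<bar>)"
  unfolding copula_def by (rule jc_lip) (auto simp: U_le_eq clamp_inc)

lemma S_lip: "\<bar>surv_copula M X a - surv_copula M X b\<bar> \<le> (\<Sum>i\<in>UNIV. \<bar>a$i - b$i\<bar>)"
  unfolding surv_copula_def by (rule jc_lip) (auto simp: W_le_eq clamp_inc)

lemma Delta_lip: "\<bar>copula_delta M X a - copula_delta M X b\<bar> \<le> (\<Sum>i\<in>UNIV. \<bar>a$i - b$i\<bar>)"
  using C_lip[of a b] S_lip[of a b] unfolding copula_delta_def by (intro absh)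

lemma CS_lip: "\<bar>copula_sym M X a - copula_sym M X b\<bar> \<le> (\<Sum>i\<in>UNIV. \<bar>a$i - b$i\<bar>)"
  using C_lip[of a b] S_lip[of a b] unfolding copula_sym_def by (intro absh2)

lemma C_ones: "copula M X (\<chi> j. if j = i then t else 1) = max 0 (min 1 t)"
  unfolding copula_def using jc_ones[of "copula_vec M X" i t] F_le1 by (simp add: U_le_eq)

lemma S_ones: "surv_copula M X (\<chi> j. if j = i then t else 1) = max 0 (min 1 t)"
  unfolding surv_copula_def using jc_ones[of "\<lambda>\<omega>. (\<chi> i. 1) - copula_vec M X \<omega>" i t] F_nonneg by (simp add: W_le_eq)

lemma CS_ones: "copula_sym M X (\<chi> j. if j = i then t else 1) = max 0 (min 1 t)"
  by (simp add: copula_sym_def C_ones S_ones)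

lemma cdf_copula: "joint_cdf M X x = copula M X (\<chi> i. F i (x$i))"
  unfolding copula_def joint_cdf_def
proof (rule finite_measure_eq_AE)
  show "AE \<omega> in M. (\<omega> \<in> {\<omega> \<in> space M. \<forall>i. X \<omega> $ i \<le> x $ i}) =
      (\<omega> \<in> {\<omega> \<in> space M. \<forall>i. copula_vec M X \<omega> $ i \<le> (\<chi> i. F i (x $ i)) $ i})"
    using AE_U_neq[of "\<lambda>i. F i (x$i)"]
  proof eventually_elim
    case (elim \<omega>)
    have "X \<omega> $ i \<le> x $ i \<longleftrightarrow> F i (X \<omega> $ i) \<le> F i (x$i)" for i
    proof
      assume "X \<omega> $ i \<le> x $ i" then show "F i (X \<omega> $ i) \<le> F i (x$i)" by (rule F_mono)
    next
      assume "F i (X \<omega> $ i) \<le> F i (x$i)"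
      then have "F i (X \<omega> $ i) < F i (x$i)" using elim by (auto simp: order_le_less)
      then show "X \<omega> $ i \<le> x $ i" using F_mono[of "x$i" "X \<omega> $ i" i] by (cases "X \<omega> $ i \<le> x $ i") auto
    qed
    then show ?case by simp
  qed
qed measurable

lemma surv_copula_eq: "joint_surv M X (-x) = surv_copula M X (\<chi> i. marg_surv M X i (- (x$i)))"
  unfolding surv_copula_def joint_surv_def joint_cdf_def
proof (rule finite_measure_eq_AE)
  show "AE \<omega> in M. (\<omega> \<in> {\<omega> \<in> space M. \<forall>i. X \<omega> $ i > (-x) $ i}) =
      (\<omega> \<in> {\<omega> \<in> space M. \<forall>i. ((\<chi> i. 1) - copula_vec M X \<omega>) $ i \<le> (\<chi> i. marg_surv M X i (- (x$i))) $ i})"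
    using AE_U_neq[of "\<lambda>i. F i (- x$i)"]
  proof eventually_elim
    case (elim \<omega>)
    have "X \<omega> $ i > - x $ i \<longleftrightarrow> F i (- x$i) \<le> F i (X \<omega> $ i)" for i
    proof
      assume "X \<omega> $ i > - x $ i" then show "F i (- x$i) \<le> F i (X \<omega> $ i)" by (intro F_mono) simp
    next
      assume "F i (- x$i) \<le> F i (X \<omega> $ i)"
      moreover have "F i (- x$i) \<noteq> F i (X \<omega> $ i)" using elim by metis
      ultimately have "F i (- x$i) < F i (X \<omega> $ i)" by simp
      then show "X \<omega> $ i > - x $ i" using F_mono[of "X \<omega> $ i" "- x$i" i] by (cases "X \<omega> $ i > - x $ i") auto
    qed
    then show ?case by (simp add: marg_surv_def)
  qed
qed measurable

end


lemma eps_zero: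
  fixes y N :: real
  assumes N: "0 \<le> N" and h: "\<And>e. 0 < e \<Longrightarrow> e < 1/2 \<Longrightarrow> \<bar>y\<bar> \<le> N * e"
  shows "y = 0"
proof (rule ccontr)
  assume "y \<noteq> 0"
  then have yp: "0 < \<bar>y\<bar>" by simp
  define e where "e = min (1/4) (\<bar>y\<bar> / (2 * N + 2))"
  have e0: "0 < e" "e < 1/2" using yp N by (auto simp: e_def)
  have "N * e \<le> N * (\<bar>y\<bar> / (2 * N + 2))" using N by (intro mult_left_mono) (auto simp: e_def)
  also have "\<dots> < \<bar>y\<bar>"
  proof -
    have p: "0 \<le> N * \<bar>y\<bar>" using N by simp
    have "N * \<bar>y\<bar> < \<bar>y\<bar> * (2 * N + 2)" using p yp by (simp add: algebra_simps)
    then show ?thesis using N by (simp add: pos_divide_less_eq)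
  qed
  finally show False using h[OF e0] by simp
qed

context cm begin

lemma AE_X_neq: "AE \<omega> in M. \<forall>i. X \<omega> $ i \<noteq> v i"
proof -
  have "AE \<omega> in M. X \<omega> $ i \<noteq> v i" for i
    using cont[of i "v i"] by (subst AE_iff_measurable[OF _ refl]) (auto simp: emeasure_eq_measure)
  then show ?thesis by (subst AE_all_countable) auto
qed

lemma X_less: "measure M {\<omega>\<in>space M. X \<omega> $ i < s} = F i s"
proof -
  have "{\<omega>\<in>space M. X \<omega> $ i \<le> s} = {\<omega>\<in>space M. X \<omega> $ i < s} \<union> {\<omega>\<in>space M. X \<omega> $ i = s}"
    by auto
  moreover have "measure M ({\<omega>\<in>space M. X \<omega> $ i < s} \<union> {\<omega>\<in>space M. X \<omega> $ i = s})
     = measure M {\<omega>\<in>space M. X \<omega> $ i < s} + measure M {\<omega>\<in>space M. X \<omega> $ i = s}"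
    by (intro finite_measure_Union) auto
  ultimately show ?thesis using cont[of i s] by (simp add: marg_cdf_def)
qed

lemma neg_cdf: "measure M {\<omega>\<in>space M. - (X \<omega> $ i) \<le> t} = 1 - F i (-t)"
proof -
  have "{\<omega>\<in>space M. - (X \<omega> $ i) \<le> t} = space M - {\<omega>\<in>space M. X \<omega> $ i < -t}" by auto
  moreover have "measure M (space M - {\<omega>\<in>space M. X \<omega> $ i < -t}) = 1 - measure M {\<omega>\<in>space M. X \<omega> $ i < -t}"
    by (intro prob_compl) auto
  ultimately show ?thesis using X_less by simp
qed

lemma MS_iff_F: "(\<forall>i. distr M borel (\<lambda>\<omega>. X \<omega> $ i) = distr M borel (\<lambda>\<omega>. - (X \<omega> $ i)))
   \<longleftrightarrow> (\<forall>i t. F i t = 1 - F i (-t))"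
proof
  assume A: "\<forall>i. distr M borel (\<lambda>\<omega>. X \<omega> $ i) = distr M borel (\<lambda>\<omega>. - (X \<omega> $ i))"
  show "\<forall>i t. F i t = 1 - F i (-t)"
  proof (intro allI)
    fix i t
    have "F i t = measure (distr M borel (\<lambda>\<omega>. X \<omega> $ i)) {..t}"
      by (simp add: marg_cdf_def measure_distr vimage_def Int_def conj_commute)
    also have "\<dots> = measure (distr M borel (\<lambda>\<omega>. - (X \<omega> $ i))) {..t}" using A by simp
    also have "\<dots> = measure M {\<omega>\<in>space M. - (X \<omega> $ i) \<le> t}"
      by (simp add: measure_distr vimage_def Int_def conj_commute)
    finally show "F i t = 1 - F i (-t)" using neg_cdf by simp
  qed
next
  assume A: "\<forall>i t. F i t = 1 - F i (-t)"
  show "\<forall>i. distr M borel (\<lambda>\<omega>. X \<omega> $ i) = distr M borel (\<lambda>\<omega>. - (X \<omega> $ i))"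
  proof
    fix i
    show "distr M borel (\<lambda>\<omega>. X \<omega> $ i) = distr M borel (\<lambda>\<omega>. - (X \<omega> $ i))"
    proof (rule cdf_unique)
      show "real_distribution (distr M borel (\<lambda>\<omega>. X \<omega> $ i))" by (rule rd)
      show "real_distribution (distr M borel (\<lambda>\<omega>. - (X \<omega> $ i)))" by (intro real_distribution_distr) simp
      show "cdf (distr M borel (\<lambda>\<omega>. X \<omega> $ i)) = cdf (distr M borel (\<lambda>\<omega>. - (X \<omega> $ i)))"
      proof
        fix t
        have "cdf (distr M borel (\<lambda>\<omega>. - (X \<omega> $ i))) t = measure M {\<omega>\<in>space M. - (X \<omega> $ i) \<le> t}"
          by (simp add: cdf_def measure_distr vimage_def Int_def conj_commute)
        then show "cdf (distr M borel (\<lambda>\<omega>. X \<omega> $ i)) t = cdf (distr M borel (\<lambda>\<omega>. - (X \<omega> $ i))) t"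
          using A neg_cdf F_cdf by metis
      qed
    qed
  qed
qed

lemma P0: "joint_cdf M X x - joint_surv M X (-x) =
   (copula_sym M X (\<chi> i. F i (x$i)) - copula_sym M X (\<chi> i. marg_surv M X i (- (x$i))))
 + (copula_delta M X (\<chi> i. F i (x$i)) + copula_delta M X (\<chi> i. marg_surv M X i (- (x$i))))"
  unfolding cdf_copula surv_copula_eq copula_sym_def copula_delta_def by (simp add: field_simps)


end

context cm begin
lemma P1: "(\<forall>x. copula_sym M X (\<chi> i. F i (x$i)) - copula_sym M X (\<chi> i. marg_surv M X i (- (x$i))) = 0)
  \<longleftrightarrow> (\<forall>i. distr M borel (\<lambda>\<omega>. X \<omega> $ i) = distr M borel (\<lambda>\<omega>. - (X \<omega> $ i)))"
  unfolding MS_iff_F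
proof
  assume A: "\<forall>i t. F i t = 1 - F i (-t)"
  have "marg_surv M X i (- t) = F i t" for i t
    using A[rule_format, of i t] by (simp add: marg_surv_def)
  then show "\<forall>x. copula_sym M X (\<chi> i. F i (x$i)) - copula_sym M X (\<chi> i. marg_surv M X i (- (x$i))) = 0"
    by simp
next
  assume B: "\<forall>x. copula_sym M X (\<chi> i. F i (x$i)) - copula_sym M X (\<chi> i. marg_surv M X i (- (x$i))) = 0"
  show "\<forall>i t. F i t = 1 - F i (-t)"
  proof (intro allI)
    fix i t
    define E where "E s = (\<Sum>j\<in>UNIV. \<bar>F j s - 1\<bar> + \<bar>F j (-s)\<bar>)" for s
    have bnd: "\<bar>F i t - (1 - F i (-t))\<bar> \<le> E s" for s
    proof -
      define x where "x = (\<chi> j. if j = i then t else s)"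
      define a' where "a' = (\<chi> j. if j = i then F i t else 1)"
      define b' where "b' = (\<chi> j. if j = i then 1 - F i (-t) else 1)"
      have ca: "copula_sym M X a' = F i t" using CS_ones[of i "F i t"] F_nonneg[of i t] F_le1[of i t]
        by (simp add: a'_def)
      have cb: "copula_sym M X b' = 1 - F i (-t)" using CS_ones[of i "1 - F i (-t)"] F_nonneg[of i "-t"] F_le1[of i "-t"]
        by (simp add: b'_def)
      have "\<bar>copula_sym M X (\<chi> j. F j (x$j)) - copula_sym M X a'\<bar> \<le> (\<Sum>j\<in>UNIV. \<bar>(\<chi> j. F j (x$j)) $ j - a' $ j\<bar>)"
        by (rule CS_lip)
      also have "\<dots> \<le> (\<Sum>j\<in>UNIV. \<bar>F j s - 1\<bar>)"
        by (intro sum_mono) (auto simp: x_def a'_def)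
      finally have e1: "\<bar>copula_sym M X (\<chi> j. F j (x$j)) - copula_sym M X a'\<bar> \<le> (\<Sum>j\<in>UNIV. \<bar>F j s - 1\<bar>)" .
      have "\<bar>copula_sym M X (\<chi> j. marg_surv M X j (- (x$j))) - copula_sym M X b'\<bar> \<le> (\<Sum>j\<in>UNIV. \<bar>(\<chi> j. marg_surv M X j (- (x$j))) $ j - b' $ j\<bar>)"
        by (rule CS_lip)
      also have "\<dots> \<le> (\<Sum>j\<in>UNIV. \<bar>F j (-s)\<bar>)"
        by (intro sum_mono) (auto simp: x_def b'_def marg_surv_def)
      finally have e2: "\<bar>copula_sym M X (\<chi> j. marg_surv M X j (- (x$j))) - copula_sym M X b'\<bar> \<le> (\<Sum>j\<in>UNIV. \<bar>F j (-s)\<bar>)" .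
      have "E s = (\<Sum>j\<in>UNIV. \<bar>F j s - 1\<bar>) + (\<Sum>j\<in>UNIV. \<bar>F j (-s)\<bar>)"
        by (simp add: E_def sum.distrib)
      then show ?thesis using e1 e2 B[rule_format, of x] ca cb by linarith
    qed
    have "(E \<longlongrightarrow> (\<Sum>j\<in>(UNIV::'n set). \<bar>1 - 1\<bar> + \<bar>0\<bar>)) at_top"
      unfolding E_def
    proof (intro tendsto_sum tendsto_add tendsto_rabs tendsto_diff tendsto_const)
      fix j
      show "(F j \<longlongrightarrow> 1) at_top" by (rule F_top)
      show "((\<lambda>s. F j (-s)) \<longlongrightarrow> 0) at_top"
        using filterlim_compose[OF F_bot filterlim_uminus_at_bot_at_top] .
    qed
    then have "(E \<longlongrightarrow> 0) at_top" by simp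
    then have "\<bar>F i t - (1 - F i (-t))\<bar> \<le> 0"
      using bnd by (intro tendsto_le[OF trivial_limit_at_top_linorder, of E 0 "\<lambda>_. \<bar>F i t - (1 - F i (-t))\<bar>"]) auto
    then show "F i t = 1 - F i (-t)" by simp
  qed
qed

end


lemma nth_borel[measurable]: "(\<lambda>v::real^'n. v $ i) \<in> borel_measurable borel"
  by (intro borel_measurable_continuous_on[where f="\<lambda>v. v $ i"]) (auto intro: continuous_intros)

context cm begin

lemma negX_meas[measurable]: "(\<lambda>\<omega>. - X \<omega>) \<in> borel_measurable M"
  by measurable

lemma P2: "(\<forall>x. copula_delta M X (\<chi> i. F i (x$i)) + copula_delta M X (\<chi> i. marg_surv M X i (- (x$i))) = 0)
  \<longleftrightarrow> distr M borel (copula_vec M X) = distr M borel (\<lambda>\<omega>. (\<chi> i. 1) - copula_vec M X \<omega>)"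
proof
  assume B: "\<forall>x. copula_delta M X (\<chi> i. F i (x$i)) + copula_delta M X (\<chi> i. marg_surv M X i (- (x$i))) = 0"
  have z1: "copula_delta M X (\<chi> i. F i (x$i)) = 0" for x
  proof (rule iter_zero[where H="\<lambda>i t. marg_surv M X i (-t)"])
    show "\<bar>copula_delta M X a - copula_delta M X b\<bar> \<le> (\<Sum>i\<in>UNIV. \<bar>a $ i - b $ i\<bar>)" for a b
      by (rule Delta_lip)
    show "F i s \<le> F i t" if "s \<le> t" for i s t using that by (rule F_mono)
    show "marg_surv M X i (- s) \<le> marg_surv M X i (- t)" if "s \<le> t" for i s t
      using F_mono[of "-t" "-s" i] that by (simp add: marg_surv_def)
    show "0 \<le> F i t \<and> F i t \<le> 1" for i t using F_nonneg F_le1 by simp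
    show "0 \<le> marg_surv M X i (- t) \<and> marg_surv M X i (- t) \<le> 1" for i t
      using F_nonneg[of i "-t"] F_le1[of i "-t"] by (simp add: marg_surv_def)
    show "\<exists>t. F i t = v" if "0 < v" "v < 1" for i v using F_surj that by blast
    show "copula_delta M X (\<chi> i. F i (x $ i)) + copula_delta M X (\<chi> i. marg_surv M X i (- x $ i)) = 0" for x
      using B by simp
  qed
  have z2: "copula_delta M X u = 0" if u: "\<forall>i. 0 < u$i \<and> u$i < 1" for u
  proof -
    have "\<forall>i. \<exists>t. F i t = u$i" using F_surj u by blast
    then obtain f where f: "\<And>i. F i (f i) = u$i" by metis
    have "u = (\<chi> i. F i ((\<chi> i. f i) $ i))" by (simp add: f vec_eq_iff)
    then show ?thesis using z1 by metis
  qed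
  have z3: "copula_delta M X u = 0" if u: "\<forall>i. 0 \<le> u$i \<and> u$i \<le> 1" for u
  proof (rule eps_zero[of "real CARD('n)"])
    fix e :: real assume e: "0 < e" "e < 1/2"
    define v where "v = (\<chi> i. max e (min (1-e) (u$i)))"
    have "copula_delta M X v = 0" using e by (intro z2) (auto simp: v_def)
    then have "\<bar>copula_delta M X u\<bar> = \<bar>copula_delta M X u - copula_delta M X v\<bar>" by simp
    also have "\<dots> \<le> (\<Sum>i\<in>UNIV. \<bar>u $ i - v $ i\<bar>)" by (rule Delta_lip)
    also have "\<dots> \<le> (\<Sum>i\<in>(UNIV::'n set). e)"
    proof (intro sum_mono)
      fix i
      have "0 \<le> u$i" "u$i \<le> 1" using u by auto
      then show "\<bar>u$i - v$i\<bar> \<le> e" using e by (auto simp: v_def abs_le_iff max_def min_def)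
    qed
    also have "\<dots> = real CARD('n) * e" by simp
    finally show "\<bar>copula_delta M X u\<bar> \<le> real CARD('n) * e" .
  qed simp
  have ceq: "copula M X a = surv_copula M X a" for a
  proof -
    define ca where "ca = (\<chi> j. max 0 (min 1 (a$j)))"
    have "copula M X a = copula M X ca"
      unfolding copula_def ca_def
    proof (rule jc_clamp)
      show "measure M {\<omega> \<in> space M. copula_vec M X \<omega> $ j = 0} = 0" for j using U_eq0[of j 0] by simp
    qed (auto simp: F_nonneg F_le1)
    moreover have "surv_copula M X a = surv_copula M X ca"
      unfolding surv_copula_def ca_def
    proof (rule jc_clamp)
      fix j
      have "{\<omega> \<in> space M. ((\<chi> i. 1) - copula_vec M X \<omega>) $ j = 0} = {\<omega> \<in> space M. F j (X \<omega> $ j) = 1}"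
        by auto
      then show "measure M {\<omega> \<in> space M. ((\<chi> i. 1) - copula_vec M X \<omega>) $ j = 0} = 0"
        using U_eq0[of j 1] by simp
    qed (auto simp: F_nonneg F_le1)
    moreover have "copula_delta M X ca = 0" by (intro z3) (auto simp: ca_def)
    ultimately show ?thesis by (simp add: copula_delta_def)
  qed
  show "distr M borel (copula_vec M X) = distr M borel (\<lambda>\<omega>. (\<chi> i. 1) - copula_vec M X \<omega>)"
    by (rule mv_unique) (use ceq in \<open>auto simp: copula_def surv_copula_def prob_space_axioms\<close>)
next
  assume E: "distr M borel (copula_vec M X) = distr M borel (\<lambda>\<omega>. (\<chi> i. 1) - copula_vec M X \<omega>)"
  have "copula M X a = surv_copula M X a" for a
    unfolding copula_def surv_copula_def jc_distr[OF U_vec_meas] jc_distr[OF W_vec_meas] E ..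
  then show "\<forall>x. copula_delta M X (\<chi> i. F i (x$i)) + copula_delta M X (\<chi> i. marg_surv M X i (- (x$i))) = 0"
    by (simp add: copula_delta_def)
qed

lemma surv_neg: "joint_surv M X (-x) = joint_cdf M (\<lambda>\<omega>. - X \<omega>) x"
  unfolding joint_surv_def joint_cdf_def
proof (rule finite_measure_eq_AE)
  show "AE \<omega> in M. (\<omega> \<in> {\<omega> \<in> space M. \<forall>i. (- x) $ i < X \<omega> $ i}) = (\<omega> \<in> {\<omega> \<in> space M. \<forall>i. (- X \<omega>) $ i \<le> x $ i})"
    using AE_X_neq[of "\<lambda>i. - (x$i)"]
  proof eventually_elim
    case (elim \<omega>)
    have "(- x) $ i < X \<omega> $ i \<longleftrightarrow> (- X \<omega>) $ i \<le> x $ i" for i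
      using elim[rule_format, of i] by auto
    then show ?case by simp
  qed
qed measurable

lemma P3: "distr M borel X = distr M borel (\<lambda>\<omega>. - X \<omega>) \<longleftrightarrow>
   ((\<forall>i. distr M borel (\<lambda>\<omega>. X \<omega> $ i) = distr M borel (\<lambda>\<omega>. - (X \<omega> $ i)))
    \<and> distr M borel (copula_vec M X) = distr M borel (\<lambda>\<omega>. (\<chi> i. 1) - copula_vec M X \<omega>))"
proof
  assume A: "distr M borel X = distr M borel (\<lambda>\<omega>. - X \<omega>)"
  have MS: "\<forall>i. distr M borel (\<lambda>\<omega>. X \<omega> $ i) = distr M borel (\<lambda>\<omega>. - (X \<omega> $ i))"
  proof
    fix i
    have "distr M borel (\<lambda>\<omega>. X \<omega> $ i) = distr (distr M borel X) borel (\<lambda>v. v $ i)"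
      by (subst distr_distr) (simp_all add: comp_def)
    also have "\<dots> = distr (distr M borel (\<lambda>\<omega>. - X \<omega>)) borel (\<lambda>v. v $ i)" using A by simp
    also have "\<dots> = distr M borel (\<lambda>\<omega>. - (X \<omega> $ i))"
      by (subst distr_distr) (simp_all add: comp_def)
    finally show "distr M borel (\<lambda>\<omega>. X \<omega> $ i) = distr M borel (\<lambda>\<omega>. - (X \<omega> $ i))" .
  qed
  have "\<forall>x. copula_delta M X (\<chi> i. F i (x$i)) + copula_delta M X (\<chi> i. marg_surv M X i (- (x$i))) = 0"
  proof
    fix x
    have b1: "copula_sym M X (\<chi> i. F i (x$i)) - copula_sym M X (\<chi> i. marg_surv M X i (- (x$i))) = 0"
      using MS P1 by blast
    have "joint_cdf M X x = joint_cdf M (\<lambda>\<omega>. - X \<omega>) x"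
      unfolding jc_distr[OF Xm] jc_distr[OF negX_meas] A ..
    then have "joint_cdf M X x - joint_surv M X (-x) = 0" using surv_neg by simp
    then show "copula_delta M X (\<chi> i. F i (x$i)) + copula_delta M X (\<chi> i. marg_surv M X i (- (x$i))) = 0"
      using P0[of x] b1 by simp
  qed
  then show "(\<forall>i. distr M borel (\<lambda>\<omega>. X \<omega> $ i) = distr M borel (\<lambda>\<omega>. - (X \<omega> $ i)))
    \<and> distr M borel (copula_vec M X) = distr M borel (\<lambda>\<omega>. (\<chi> i. 1) - copula_vec M X \<omega>)"
    using MS P2 by blast
next
  assume A: "(\<forall>i. distr M borel (\<lambda>\<omega>. X \<omega> $ i) = distr M borel (\<lambda>\<omega>. - (X \<omega> $ i)))
    \<and> distr M borel (copula_vec M X) = distr M borel (\<lambda>\<omega>. (\<chi> i. 1) - copula_vec M X \<omega>)"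
  have eq: "joint_cdf M X x = joint_cdf M (\<lambda>\<omega>. - X \<omega>) x" for x
  proof -
    have b1: "copula_sym M X (\<chi> i. F i (x$i)) - copula_sym M X (\<chi> i. marg_surv M X i (- (x$i))) = 0"
      using A P1 by blast
    have b2: "copula_delta M X (\<chi> i. F i (x$i)) + copula_delta M X (\<chi> i. marg_surv M X i (- (x$i))) = 0"
      using A P2 by blast
    show ?thesis using P0[of x] b1 b2 surv_neg[of x] by simp
  qed
  show "distr M borel X = distr M borel (\<lambda>\<omega>. - X \<omega>)"
    by (rule mv_unique) (use eq in \<open>auto simp: prob_space_axioms\<close>)
qed

end

theorem theorem1:
  fixes M :: "'a measure" and R :: "'a \<Rightarrow> real^'n" and c :: "real^'n"
  assumes "prob_space M"
    and "R \<in> borel_measurable M"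
    and cont_marg: "\<And>i t. measure M {\<omega> \<in> space M. R \<omega> $ i = t} = 0"
  defines "X \<equiv> (\<lambda>\<omega>. R \<omega> - c)"
  defines "Fx \<equiv> (\<lambda>x::real^'n. \<chi> i. marg_cdf M X i (x $ i))"
  defines "Fbx \<equiv> (\<lambda>x::real^'n. \<chi> i. marg_surv M X i (- (x $ i)))"
  defines "B1 \<equiv> (\<lambda>x. copula_sym M X (Fx x) - copula_sym M X (Fbx x))"
  defines "B2 \<equiv> (\<lambda>x. copula_delta M X (Fx x) + copula_delta M X (Fbx x))"
  shows "(\<forall>x. joint_cdf M X x - joint_surv M X (- x) = B1 x + B2 x)
    \<and> ((\<forall>x. B1 x = 0) \<longleftrightarrow>
         (\<forall>i. distr M borel (\<lambda>\<omega>. X \<omega> $ i) = distr M borel (\<lambda>\<omega>. - (X \<omega> $ i))))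
    \<and> ((\<forall>x. B2 x = 0) \<longleftrightarrow>
         distr M borel (copula_vec M X) = distr M borel (\<lambda>\<omega>. (\<chi> i. 1) - copula_vec M X \<omega>))
    \<and> (distr M borel X = distr M borel (\<lambda>\<omega>. - X \<omega>) \<longleftrightarrow>
         ((\<forall>i. distr M borel (\<lambda>\<omega>. X \<omega> $ i) = distr M borel (\<lambda>\<omega>. - (X \<omega> $ i)))
          \<and> distr M borel (copula_vec M X) = distr M borel (\<lambda>\<omega>. (\<chi> i. 1) - copula_vec M X \<omega>)))"
proof -
  interpret P: prob_space M by fact
  have Xm: "X \<in> borel_measurable M"
    unfolding X_def by (intro borel_measurable_diff assms(2) borel_measurable_const)
  have cX: "measure M {\<omega> \<in> space M. X \<omega> $ i = t} = 0" for i t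
  proof -
    have "{\<omega> \<in> space M. X \<omega> $ i = t} = {\<omega> \<in> space M. R \<omega> $ i = t + c $ i}"
      by (auto simp: X_def)
    then show ?thesis using cont_marg by simp
  qed
  interpret cm M X by unfold_locales (use Xm cX in auto)
  have 1: "\<forall>x. joint_cdf M X x - joint_surv M X (- x) = B1 x + B2 x"
    unfolding B1_def B2_def Fx_def Fbx_def using P0 by simp
  have 2: "(\<forall>x. B1 x = 0) \<longleftrightarrow> (\<forall>i. distr M borel (\<lambda>\<omega>. X \<omega> $ i) = distr M borel (\<lambda>\<omega>. - (X \<omega> $ i)))"
    unfolding B1_def Fx_def Fbx_def using P1 by simp
  have 3: "(\<forall>x. B2 x = 0) \<longleftrightarrow> distr M borel (copula_vec M X) = distr M borel (\<lambda>\<omega>. (\<chi> i. 1) - copula_vec M X \<omega>)"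
    unfolding B2_def Fx_def Fbx_def using P2 by simp
  show ?thesis using 1 2 3 P3 by blast
qed

end
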